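(* Consider a sequence of problems indexed by $k\to\infty$, with $n_1=n_1(k)$, $n_2=n_2(k)$ and probability vectors ${\bf P}_c=(p_{c1},\ldots,p_{ck})$ depending on $k$; let $n=n_1+n_2$ and $\boldsymbol\xi={\bf P}_1-{\bf P}_2$, and assume: (Condition 1) $\min(n_1,n_2)\to\infty$ and $n_1/n\to c\in(0,1)$; (Condition 2) $\max_i p_{ci}^2/\|{\bf P}_c\|_2^2\to0$ for $c=1,2$; (Condition 3) $n\|{\bf P}_1+{\bf P}_2\|_2^2\ge\epsilon$ for some constant $\epsilon>0$; (Condition 4) $n^2\|\boldsymbol{\xi}\|_2^4=O(\|{\bf P}_1+{\bf P}_2\|_2^2)$. Let $X_{1i},X_{2i}$, $1\le i\le k$, be mutually independent Poisson random variables with means $\lambda_{1i}=n_1p_{1i}$ and $\lambda_{2i}=n_2p_{2i}$. Then $$\frac{\sum_{i=1}^k f_i(X_{1i},X_{2i})}{\sigma_k}\xrightarrow{d}N(0,1).$$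
   Context: $f^*(x_1,x_2)=\left(\frac{x_1}{n_1}-\frac{x_2}{n_2}\right)^2-\frac{x_1}{n_1^2}-\frac{x_2}{n_2^2}$; with $\xi_i=p_{1i}-p_{2i}$, $f_i(x_1,x_2)=f^*(x_1,x_2)-\xi_i^2-2\xi_i\left(\frac{x_1}{n_1}-\frac{x_2}{n_2}\right)+2\xi_i^2$; $\sigma_k^2=2\sum_{i=1}^k\left(\frac{p_{1i}}{n_1}+\frac{p_{2i}}{n_2}\right)^2$; $\|{\bf x}\|_2^2=\sum_ix_i^2$. *)

theory Defs
  imports "HOL-Probability.Probability" "HOL-Library.Landau_Symbols"
begin

definition fstar :: "nat \<Rightarrow> nat \<Rightarrow> real \<Rightarrow> real \<Rightarrow> real" where
  "fstar n1 n2 x1 x2 = (x1 / real n1 - x2 / real n2)^2 - x1 / (real n1)^2 - x2 / (real n2)^2"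

text \<open>f_i with xi = p_{1i} - p_{2i}, written literally as in the paper\<close>
definition fi :: "nat \<Rightarrow> nat \<Rightarrow> real \<Rightarrow> real \<Rightarrow> real \<Rightarrow> real" where
  "fi n1 n2 xi x1 x2 = fstar n1 n2 x1 x2 - xi^2 - 2 * xi * (x1 / real n1 - x2 / real n2) + 2 * xi^2"

definition sigma_k :: "nat \<Rightarrow> nat \<Rightarrow> nat \<Rightarrow> (nat \<Rightarrow> real) \<Rightarrow> (nat \<Rightarrow> real) \<Rightarrow> real" where
  "sigma_k k n1 n2 p1 p2 = sqrt (2 * (\<Sum>i=1..k. (p1 i / real n1 + p2 i / real n2)^2))"

end

theory Submission
  imports Defs
begin

definition ff :: "nat \<Rightarrow> real \<Rightarrow> real" where "ff j x = (\<Prod>t<j. x - real t)"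

definition ffl :: "real list \<Rightarrow> real \<Rightarrow> real" where
  "ffl cs x = (\<Sum>j<length cs. cs ! j * ff j x)"

lemma ffl_Nil: "ffl [] x = 0" by (simp add: ffl_def)
lemma ff_Suc_shift: "ff (Suc j) x = x * ff j (x - 1)"
  unfolding ff_def prod.lessThan_Suc_shift by (simp add: diff_diff_eq add.commute)

lemma ff_Suc: "ff (Suc j) x = ff j x * (x - real j)"
  unfolding ff_def by simp

lemma ffl_Cons: "ffl (c # cs) x = c + x * ffl cs (x - 1)"
proof -
  have "ffl (c # cs) x = c * ff 0 x + (\<Sum>j<length cs. cs ! j * ff (Suc j) x)"
    unfolding ffl_def by (simp add: sum.lessThan_Suc_shift del: sum.lessThan_Suc)
  also have "\<dots> = c + (\<Sum>j<length cs. cs ! j * (x * ff j (x - 1)))"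
    by (simp only: ff_Suc_shift) (simp add: ff_def)
  also have "\<dots> = c + x * ffl cs (x - 1)"
    by (simp add: ffl_def sum_distrib_left mult.left_commute)
  finally show ?thesis .
qed

lemma test_W4: fixes l x :: real shows "((x-l)^2-x)^4 = ffl [l^8, 16*l^4-32*l^5+24*l^6-8*l^7,
   8-64*l+208*l^2-352*l^3+316*l^4-144*l^5+28*l^6,
   208-800*l+1232*l^2-944*l^3+360*l^4-56*l^5, 652-1472*l+1256*l^2-480*l^3+70*l^4,
   576-784*l+360*l^2-56*l^3, 188-144*l+28*l^2, 24-8*l, 1] x"
  by (simp add: ffl_Cons ffl_Nil) algebra


lemma ff_zero: "m < j \<Longrightarrow> ff j (real m) = 0"
  unfolding ff_def by (rule prod_zero) auto

lemma ff_nonneg: "0 \<le> ff j (real m)"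
proof (induction j)
  case 0 then show ?case by (simp add: ff_def)
next
  case (Suc j)
  show ?case
  proof (cases "m < Suc j")
    case True then show ?thesis by (simp add: ff_zero)
  next
    case False then show ?thesis using Suc by (simp add: ff_Suc)
  qed
qed

lemma ff_fact: "ff j (real (m + j)) * fact m = fact (m + j)"
proof (induction j arbitrary: m)
  case 0 then show ?case by (simp add: ff_def)
next
  case (Suc j)
  have "ff (Suc j) (real (m + Suc j)) * fact m = ff j (real (Suc m + j)) * (real m + 1) * fact m"
    by (simp add: ff_Suc)
  also have "\<dots> = ff j (real (Suc m + j)) * fact (Suc m)"
    by (simp add: algebra_simps)
  also have "\<dots> = fact (m + Suc j)" using Suc[of "Suc m"] by simp
  finally show ?case .
qed

lemma ff_sums: "(\<lambda>m. l ^ m / fact m * exp (- l) * ff j (real m)) sums (l ^ j)"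
proof -
  let ?f = "\<lambda>m. l ^ m / fact m * exp (- l) * ff j (real m)"
  have "(\<lambda>i. l ^ i /\<^sub>R fact i) sums exp l" by (rule exp_converges)
  then have "(\<lambda>i. l ^ j * exp (- l) * (l ^ i /\<^sub>R fact i)) sums (l ^ j * exp (- l) * exp l)"
    by (rule sums_mult)
  moreover have "?f (i + j) = l ^ j * exp (- l) * (l ^ i /\<^sub>R fact i)" for i
  proof -
    have "ff j (real (i + j)) = fact (i + j) / fact i"
      using ff_fact[of j i] by (simp add: field_simps)
    then show ?thesis by (simp add: power_add field_simps)
  qed
  ultimately have "(\<lambda>i. ?f (i + j)) sums (l ^ j * exp (- l) * exp l)" by simp
  moreover have "l ^ j * exp (- l) * exp l = l ^ j" by (simp add: mult.assoc flip: exp_add)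
  ultimately have "(\<lambda>i. ?f (i + j)) sums (l ^ j)" by simp
  then have "?f sums (l ^ j + (\<Sum>i<j. ?f i))" by (rule sums_iff_shift[THEN iffD1])
  moreover have "(\<Sum>i<j. ?f i) = 0" by (simp add: ff_zero)
  ultimately show ?thesis by simp
qed

lemma pow_le_ff: "real m ^ j \<le> 2 ^ j * ff j (real m) + (2 * real j) ^ j"
proof (cases "real m < 2 * real j")
  case True
  then have "real m ^ j \<le> (2 * real j) ^ j" by (intro power_mono) auto
  moreover have "0 \<le> 2 ^ j * ff j (real m)" using ff_nonneg[of j m] by simp
  ultimately show ?thesis by linarith
next
  case False
  have "(real m / 2) ^ j = (\<Prod>t<j. real m / 2)" by simp
  also have "\<dots> \<le> ff j (real m)" unfolding ff_def
    by (rule prod_mono) (use False in auto)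
  finally have "(real m / 2) ^ j \<le> ff j (real m)" .
  then have "real m ^ j \<le> 2 ^ j * ff j (real m)" by (simp add: power_divide field_simps)
  then show ?thesis by (simp add: add_increasing2)
qed

locale pois = prob_space M for M :: "'a measure" +
  fixes Y :: "'a \<Rightarrow> nat" and l :: real
  assumes Y_meas[measurable]: "Y \<in> measurable M (count_space UNIV)"
    and l_nonneg: "0 \<le> l"
    and Y_dist: "\<And>m. measure M {\<omega> \<in> space M. Y \<omega> = m} = l ^ m / fact m * exp (- l)"
begin

definition pm :: "nat \<Rightarrow> real" where "pm m = l ^ m / fact m * exp (- l)"

lemma pm_nonneg: "0 \<le> pm m" unfolding pm_def using l_nonneg by simp

lemma distr_Y: "distr M (count_space UNIV) Y = density (count_space UNIV) (\<lambda>m. ennreal (pm m))"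
proof (rule measure_eqI_countable[where A=UNIV])
  fix a :: nat
  have "emeasure (distr M (count_space UNIV) Y) {a} = emeasure M {\<omega> \<in> space M. Y \<omega> = a}"
    by (subst emeasure_distr) (auto intro!: arg_cong[where f="emeasure M"])
  also have "\<dots> = ennreal (pm a)"
    by (subst emeasure_eq_measure) (simp add: Y_dist pm_def)
  also have "\<dots> = emeasure (density (count_space UNIV) (\<lambda>m. ennreal (pm m))) {a}"
    by (subst emeasure_density) (auto simp: nn_integral_count_space_finite)
  finally show "emeasure (distr M (count_space UNIV) Y) {a} = emeasure (density (count_space UNIV) (\<lambda>m. ennreal (pm m))) {a}" .
qed auto

lemma E_sum:
  fixes g :: "nat \<Rightarrow> real"
  assumes "summable (\<lambda>m. \<bar>pm m * g m\<bar>)"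
  shows "integrable M (\<lambda>\<omega>. g (Y \<omega>))" "(\<integral>\<omega>. g (Y \<omega>) \<partial>M) = (\<Sum>m. pm m * g m)"
proof -
  have i: "integrable (count_space UNIV) (\<lambda>m. pm m *\<^sub>R g m)"
    using assms by (simp add: integrable_count_space_nat_iff)
  then have "integrable (density (count_space UNIV) (\<lambda>m. ennreal (pm m))) g"
    by (subst integrable_density) (auto simp: pm_nonneg)
  then have "integrable (distr M (count_space UNIV) Y) g" by (simp add: distr_Y)
  then show "integrable M (\<lambda>\<omega>. g (Y \<omega>))" by (subst (asm) integrable_distr_eq) auto
  have "(\<integral>\<omega>. g (Y \<omega>) \<partial>M) = integral\<^sup>L (distr M (count_space UNIV) Y) g"
    by (subst integral_distr) auto
  also have "\<dots> = integral\<^sup>L (count_space UNIV) (\<lambda>m. pm m *\<^sub>R g m)"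
    unfolding distr_Y by (subst integral_density) (auto simp: pm_nonneg)
  also have "\<dots> = (\<Sum>m. pm m * g m)" using i by (simp add: integral_count_space_nat)
  finally show "(\<integral>\<omega>. g (Y \<omega>) \<partial>M) = (\<Sum>m. pm m * g m)" .
qed

lemma E_ff: "integrable M (\<lambda>\<omega>. ff j (real (Y \<omega>)))" "(\<integral>\<omega>. ff j (real (Y \<omega>)) \<partial>M) = l ^ j"
proof -
  have s: "(\<lambda>m. pm m * ff j (real m)) sums (l ^ j)"
    using ff_sums[of l j] by (simp add: pm_def)
  have a: "(\<lambda>m. \<bar>pm m * ff j (real m)\<bar>) = (\<lambda>m. pm m * ff j (real m))"
    using pm_nonneg ff_nonneg by (simp add: abs_mult)
  have "summable (\<lambda>m. \<bar>pm m * ff j (real m)\<bar>)" unfolding a using s by (rule sums_summable)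
  note E = E_sum[OF this]
  show "integrable M (\<lambda>\<omega>. ff j (real (Y \<omega>)))" using E(1) by simp
  show "(\<integral>\<omega>. ff j (real (Y \<omega>)) \<partial>M) = l ^ j" using E(2) s by (simp add: sums_iff)
qed

lemma E_ffl: "integrable M (\<lambda>\<omega>. ffl cs (real (Y \<omega>)))"
    "(\<integral>\<omega>. ffl cs (real (Y \<omega>)) \<partial>M) = (\<Sum>j<length cs. cs ! j * l ^ j)"
  unfolding ffl_def using E_ff by (auto simp: integral_sum)

lemma integrable_pow: "integrable M (\<lambda>\<omega>. real (Y \<omega>) ^ j)"
proof (rule Bochner_Integration.integrable_bound)
  show "integrable M (\<lambda>\<omega>. 2 ^ j * ff j (real (Y \<omega>)) + (2 * real j) ^ j)"
    using E_ff(1) by auto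
  show "AE \<omega> in M. norm (real (Y \<omega>) ^ j) \<le> norm (2 ^ j * ff j (real (Y \<omega>)) + (2 * real j) ^ j)"
    using pow_le_ff ff_nonneg by (auto intro!: AE_I2 simp: add_nonneg_nonneg)
qed auto

lemma E_poly:
  assumes "\<And>x. P x = ffl cs x"
  shows "integrable M (\<lambda>\<omega>. P (real (Y \<omega>)))" "(\<integral>\<omega>. P (real (Y \<omega>)) \<partial>M) = (\<Sum>j<length cs. cs ! j * l ^ j)"
  using E_ffl[of cs] by (simp_all add: assms)

lemma hsum_Cons: fixes x :: real shows "(\<Sum>j<length (c # cs). (c # cs) ! j * x ^ j) = c + x * (\<Sum>j<length cs. cs ! j * x ^ j)"
proof -
  have "(\<Sum>i<n. cs ! i * (x * x ^ i)) = x * (\<Sum>j<n. cs ! j * x ^ j)" for n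
    by (induction n) (simp_all add: algebra_simps)
  then show ?thesis by (simp add: sum.lessThan_Suc_shift del: sum.lessThan_Suc)
qed

lemma hsum_Nil: fixes x :: real shows "(\<Sum>j<length []. [] ! j * x ^ j) = 0" by simp

lemma pid: fixes x :: real shows
  "x - l = ffl [- l, 1] x"
  "(x - l)^2 = ffl [l^2, 1 - 2*l, 1] x"
  "(x - l)^4 = ffl [l^4, 1-4*l+6*l^2-4*l^3, 7-12*l+6*l^2, 6-4*l, 1] x"
  "(x - l)^2 - x = ffl [l^2, -2*l, 1] x"
  "((x - l)^2 - x)^2 = ffl [l^4, 4*l^2-4*l^3, 2-8*l+6*l^2, 4-4*l, 1] x"
  "((x - l)^2 - x)^4 = ffl [l^8, 16*l^4-32*l^5+24*l^6-8*l^7,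
   8-64*l+208*l^2-352*l^3+316*l^4-144*l^5+28*l^6,
   208-800*l+1232*l^2-944*l^3+360*l^4-56*l^5, 652-1472*l+1256*l^2-480*l^3+70*l^4,
   576-784*l+360*l^2-56*l^3, 188-144*l+28*l^2, 24-8*l, 1] x"
  "((x - l)^2 - x) * (x - l) = ffl [- (l^3), -2*l+3*l^2, 2-3*l, 1] x"
  by (simp_all add: ffl_Cons ffl_Nil) algebra+

lemma int_A: "integrable M (\<lambda>\<omega>. real (Y \<omega>) - l)"
  using E_poly(1)[OF pid(1)] by simp
lemma E_A: "(\<integral>\<omega>. real (Y \<omega>) - l \<partial>M) = 0"
  unfolding E_poly(2)[OF pid(1)] by (simp only: hsum_Cons hsum_Nil) (simp add: algebra_simps eval_nat_numeral)
lemma int_A2: "integrable M (\<lambda>\<omega>. (real (Y \<omega>) - l)^2)"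
  using E_poly(1)[OF pid(2)] by simp
lemma E_A2: "(\<integral>\<omega>. (real (Y \<omega>) - l)^2 \<partial>M) = l"
  unfolding E_poly(2)[OF pid(2)] by (simp only: hsum_Cons hsum_Nil) (simp add: algebra_simps eval_nat_numeral)
lemma int_A4: "integrable M (\<lambda>\<omega>. (real (Y \<omega>) - l)^4)"
  using E_poly(1)[OF pid(3)] by simp
lemma E_A4: "(\<integral>\<omega>. (real (Y \<omega>) - l)^4 \<partial>M) = l + 3 * l^2"
  unfolding E_poly(2)[OF pid(3)] by (simp only: hsum_Cons hsum_Nil) (simp add: algebra_simps eval_nat_numeral)
lemma int_W: "integrable M (\<lambda>\<omega>. (real (Y \<omega>) - l)^2 - real (Y \<omega>))"
  using E_poly(1)[OF pid(4)] by simp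
lemma E_W: "(\<integral>\<omega>. (real (Y \<omega>) - l)^2 - real (Y \<omega>) \<partial>M) = 0"
  unfolding E_poly(2)[OF pid(4)] by (simp only: hsum_Cons hsum_Nil) (simp add: algebra_simps eval_nat_numeral)
lemma int_W2: "integrable M (\<lambda>\<omega>. ((real (Y \<omega>) - l)^2 - real (Y \<omega>))^2)"
  using E_poly(1)[OF pid(5)] by simp
lemma E_W2: "(\<integral>\<omega>. ((real (Y \<omega>) - l)^2 - real (Y \<omega>))^2 \<partial>M) = 2 * l^2"
  unfolding E_poly(2)[OF pid(5)] by (simp only: hsum_Cons hsum_Nil) (simp add: algebra_simps eval_nat_numeral)
lemma int_W4: "integrable M (\<lambda>\<omega>. ((real (Y \<omega>) - l)^2 - real (Y \<omega>))^4)"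
  using E_poly(1)[OF pid(6)] by simp
lemma E_W4: "(\<integral>\<omega>. ((real (Y \<omega>) - l)^2 - real (Y \<omega>))^4 \<partial>M) = 8 * l^2 + 144 * l^3 + 60 * l^4"
  unfolding E_poly(2)[OF pid(6)] by (simp only: hsum_Cons hsum_Nil) (simp add: algebra_simps eval_nat_numeral)
lemma int_WA: "integrable M (\<lambda>\<omega>. ((real (Y \<omega>) - l)^2 - real (Y \<omega>)) * (real (Y \<omega>) - l))"
  using E_poly(1)[OF pid(7)] by simp

end

lemma exp_quad_bound:
  fixes a :: real assumes "0 \<le> a"
  shows "\<bar>1 - a - exp (- a)\<bar> \<le> a^2 / 2"
proof -
  obtain s where "exp (- a) = (\<Sum>m<3. (- a) ^ m / fact m) + (exp s / fact 3) * (- a) ^ 3"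
    using Maclaurin_exp_le[of "- a" 3] by blast
  then have e: "exp (- a) = 1 - a + a^2/2 - exp s / 6 * a ^ 3"
    by (simp add: eval_nat_numeral)
  have "0 \<le> exp s / 6 * a ^ 3" using assms by simp
  then have "exp (- a) \<le> 1 - a + a^2/2" using e by linarith
  moreover have "1 - a \<le> exp (- a)" by (rule exp_minus_ge)
  ultimately show ?thesis by (simp add: abs_if)
qed

lemma cube_bound:
  fixes z t d :: real assumes "d > 0"
  shows "\<bar>t\<bar> * \<bar>z\<bar> ^ 3 \<le> \<bar>t\<bar> / 2 * (d * z^2 + z^4 / d)"
proof -
  have "d * z^2 + z^4 / d - 2 * \<bar>z\<bar>^3 = z^2 * (d - \<bar>z\<bar>)^2 / d"
    using assms by (simp add: field_simps power2_eq_square eval_nat_numeral)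
  also have "\<dots> \<ge> 0" using assms by simp
  finally have "2 * \<bar>z\<bar>^3 \<le> d * z^2 + z^4 / d" by simp
  then have "\<bar>t\<bar> * (2 * \<bar>z\<bar>^3) \<le> \<bar>t\<bar> * (d * z^2 + z^4 / d)" by (rule mult_left_mono) simp
  then show ?thesis by simp
qed

lemma (in prob_space) moment_facts:
  fixes Z :: "'a \<Rightarrow> real"
  assumes [measurable]: "Z \<in> borel_measurable M" and i4: "integrable M (\<lambda>\<omega>. Z \<omega> ^ 4)"
  shows "integrable M Z" "integrable M (\<lambda>\<omega>. Z \<omega> ^ 2)"
    "(expectation (\<lambda>\<omega>. Z \<omega> ^ 2))^2 \<le> expectation (\<lambda>\<omega>. Z \<omega> ^ 4)"
proof -
  have ib: "integrable M (\<lambda>\<omega>. 1 + Z \<omega> ^ 4)" using i4 by simp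
  have p1: "\<bar>z\<bar> \<le> 1 + z^4" for z :: real
  proof (cases "\<bar>z\<bar> \<le> 1")
    case True
    have "0 \<le> z^4" by simp
    with True show ?thesis by linarith
  next
    case False
    then have "\<bar>z\<bar> \<le> \<bar>z\<bar>^4" by (simp add: power_increasing[of 1 4 "\<bar>z\<bar>", simplified])
    then show ?thesis by (simp add: power_abs)
  qed
  have p2: "z^2 \<le> 1 + z^4" for z :: real
  proof (cases "\<bar>z\<bar> \<le> 1")
    case True
    then have "\<bar>z\<bar>^2 \<le> 1" by (intro power_le_one) auto
    then have "z^2 \<le> 1" by simp
    have "0 \<le> z^4" by simp
    with \<open>z^2 \<le> 1\<close> show ?thesis by linarith
  next
    case False
    then have "\<bar>z\<bar>^2 \<le> \<bar>z\<bar>^4" by (intro power_increasing) auto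
    then show ?thesis by (simp add: power_abs)
  qed
  show iZ: "integrable M Z"
    by (rule Bochner_Integration.integrable_bound[OF ib]) (auto intro!: AE_I2 simp: p1 add_nonneg_nonneg)
  show iZ2: "integrable M (\<lambda>\<omega>. Z \<omega> ^ 2)"
    by (rule Bochner_Integration.integrable_bound[OF ib]) (auto intro!: AE_I2 simp: p2 add_nonneg_nonneg)
  define v where "v = expectation (\<lambda>\<omega>. Z \<omega> ^ 2)"
  have "0 \<le> expectation (\<lambda>\<omega>. (Z \<omega> ^ 2 - v)^2)" by simp
  also have "(\<lambda>\<omega>. (Z \<omega> ^ 2 - v)^2) = (\<lambda>\<omega>. Z \<omega> ^ 4 - 2 * v * Z \<omega> ^ 2 + v^2)"
    by (auto simp: power2_eq_square algebra_simps eval_nat_numeral)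
  also have "expectation \<dots> = expectation (\<lambda>\<omega>. Z \<omega> ^ 4) - 2 * v * v + v^2"
    using i4 iZ2 by (simp add: prob_space v_def)
  finally show "v^2 \<le> expectation (\<lambda>\<omega>. Z \<omega> ^ 4)" by (simp add: power2_eq_square)
qed

lemma (in prob_space) char_term_bound:
  fixes Z :: "'a \<Rightarrow> real" and t d :: real
  assumes [measurable]: "Z \<in> borel_measurable M" and i4: "integrable M (\<lambda>\<omega>. Z \<omega> ^ 4)"
    and mean: "expectation Z = 0" and d: "d > 0"
  shows "cmod (char (distr M borel Z) t - complex_of_real (exp (- (t^2 * expectation (\<lambda>\<omega>. Z \<omega> ^ 2) / 2))))
     \<le> \<bar>t\<bar>^3 / 12 * (d * expectation (\<lambda>\<omega>. Z \<omega> ^ 2) + expectation (\<lambda>\<omega>. Z \<omega> ^ 4) / d)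
       + t^4 / 8 * expectation (\<lambda>\<omega>. Z \<omega> ^ 4)"
proof -
  note mf = moment_facts[OF assms(1) i4]
  define v where "v = expectation (\<lambda>\<omega>. Z \<omega> ^ 2)"
  define m where "m = expectation (\<lambda>\<omega>. Z \<omega> ^ 4)"
  have v0: "0 \<le> v" unfolding v_def by simp
  have var: "variance Z = v" unfolding v_def using mean by simp
  have c3: "cmod (char (distr M borel Z) t - (1 - t^2 * v / 2)) \<le>
      (t^2 / 6) * expectation (\<lambda>x. min (6 * (Z x)^2) (\<bar>t\<bar> * \<bar>Z x\<bar>^3))"
    by (rule char_approx3') (use mf mean var in auto)
  have imin: "integrable M (\<lambda>x. min (6 * (Z x)^2) (\<bar>t\<bar> * \<bar>Z x\<bar>^3))"
    by (rule Bochner_Integration.integrable_bound[where f="\<lambda>x. 6 * (Z x)^2"]) (use mf in \<open>auto intro!: AE_I2\<close>)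
  have ib: "integrable M (\<lambda>x. \<bar>t\<bar> / 2 * (d * Z x ^ 2 + Z x ^ 4 / d))"
    using mf i4 by auto
  have "expectation (\<lambda>x. min (6 * (Z x)^2) (\<bar>t\<bar> * \<bar>Z x\<bar>^3)) \<le> expectation (\<lambda>x. \<bar>t\<bar> / 2 * (d * Z x ^ 2 + Z x ^ 4 / d))"
    by (rule integral_mono[OF imin ib]) (rule min.coboundedI2, rule cube_bound[OF d])
  also have "\<dots> = \<bar>t\<bar> / 2 * (d * v + m / d)"
    using mf i4 by (simp add: v_def m_def)
  finally have eb: "expectation (\<lambda>x. min (6 * (Z x)^2) (\<bar>t\<bar> * \<bar>Z x\<bar>^3)) \<le> \<bar>t\<bar> / 2 * (d * v + m / d)" .
  have "(t^2 / 6) * expectation (\<lambda>x. min (6 * (Z x)^2) (\<bar>t\<bar> * \<bar>Z x\<bar>^3)) \<le> (t^2 / 6) * (\<bar>t\<bar> / 2 * (d * v + m / d))"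
    by (rule mult_left_mono[OF eb]) simp
  also have "(t^2 / 6) * (\<bar>t\<bar> / 2 * (d * v + m / d)) = \<bar>t\<bar>^3 / 12 * (d * v + m / d)"
    by (simp add: power2_eq_square power3_eq_cube abs_mult_self_eq )
  finally have e1: "cmod (char (distr M borel Z) t - (1 - t^2 * v / 2)) \<le> \<bar>t\<bar>^3 / 12 * (d * v + m / d)"
    using c3 by linarith
  have a0: "0 \<le> t^2 * v / 2" using v0 by simp
  have "cmod (complex_of_real (1 - t^2 * v / 2) - complex_of_real (exp (- (t^2 * v / 2)))) \<le> (t^2 * v / 2)^2 / 2"
    using exp_quad_bound[OF a0] by (simp flip: of_real_diff)
  also have "\<dots> = t^4 / 8 * v^2" by (simp add: power_mult_distrib power_divide eval_nat_numeral)
  also have "\<dots> \<le> t^4 / 8 * m" using mf(3) unfolding v_def m_def by (intro mult_left_mono) auto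
  finally have e2: "cmod (complex_of_real (1 - t^2 * v / 2) - complex_of_real (exp (- (t^2 * v / 2)))) \<le> t^4 / 8 * m" .
  have "cmod (char (distr M borel Z) t - complex_of_real (exp (- (t^2 * v / 2))))
     \<le> cmod (char (distr M borel Z) t - (1 - t^2 * v / 2)) + cmod (complex_of_real (1 - t^2 * v / 2) - complex_of_real (exp (- (t^2 * v / 2))))"
    by (rule order_trans[OF _ norm_triangle_ineq]) simp
  also have "\<dots> \<le> \<bar>t\<bar>^3 / 12 * (d * v + m / d) + t^4 / 8 * m" using e1 e2 by linarith
  finally show ?thesis unfolding v_def m_def .
qed

lemma (in prob_space) char_sum_bound:
  fixes Z :: "'i \<Rightarrow> 'a \<Rightarrow> real" and I :: "'i set" and t d L :: real
  assumes fin: "finite I" and ind: "indep_vars (\<lambda>_. borel) Z I"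
    and i4: "\<And>i. i \<in> I \<Longrightarrow> integrable M (\<lambda>\<omega>. Z i \<omega> ^ 4)"
    and mean: "\<And>i. i \<in> I \<Longrightarrow> expectation (Z i) = 0"
    and var: "(\<Sum>i\<in>I. expectation (\<lambda>\<omega>. Z i \<omega> ^ 2)) = 1"
    and L: "(\<Sum>i\<in>I. expectation (\<lambda>\<omega>. Z i \<omega> ^ 4)) \<le> L" and d: "d > 0"
  shows "cmod (char (distr M borel (\<lambda>\<omega>. \<Sum>i\<in>I. Z i \<omega>)) t - complex_of_real (exp (- (t^2) / 2)))
    \<le> \<bar>t\<bar>^3 / 12 * (d + L / d) + t^4 / 8 * L"
proof -
  have rv: "\<And>i. i \<in> I \<Longrightarrow> Z i \<in> borel_measurable M" using ind by (simp add: indep_vars_def2)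
  define v where "v i = expectation (\<lambda>\<omega>. Z i \<omega> ^ 2)" for i
  define m where "m i = expectation (\<lambda>\<omega>. Z i \<omega> ^ 4)" for i
  define w where "w i = complex_of_real (exp (- (t^2 * v i / 2)))" for i
  have v0: "0 \<le> v i" for i unfolding v_def by simp
  have ch: "char (distr M borel (\<lambda>\<omega>. \<Sum>i\<in>I. Z i \<omega>)) t = (\<Prod>i\<in>I. char (distr M borel (Z i)) t)"
    by (rule char_distr_sum[OF ind])
  have "(\<Sum>i\<in>I. - (t^2 * v i / 2)) = - (t^2) / 2 * (\<Sum>i\<in>I. v i)"
    by (simp add: sum_distrib_left sum_negf)
  also have "\<dots> = - (t^2) / 2" using var by (simp add: v_def)
  finally have "exp (- (t^2) / 2) = (\<Prod>i\<in>I. exp (- (t^2 * v i / 2)))"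
    using exp_sum[OF fin, of "\<lambda>i. - (t^2 * v i / 2)"] by simp
  then have ex: "complex_of_real (exp (- (t^2) / 2)) = (\<Prod>i\<in>I. w i)" by (simp add: w_def)
  have "cmod ((\<Prod>i\<in>I. char (distr M borel (Z i)) t) - (\<Prod>i\<in>I. w i))
      \<le> (\<Sum>i\<in>I. cmod (char (distr M borel (Z i)) t - w i))"
  proof (rule norm_prod_diff)
    fix i assume "i \<in> I"
    show "cmod (char (distr M borel (Z i)) t) \<le> 1"
      by (rule real_distribution.cmod_char_le_1[OF real_distribution_distr[OF rv[OF \<open>i \<in> I\<close>]]])
  next
    fix i show "cmod (w i) \<le> 1" using v0[of i] by (simp add: w_def)
  qed
  also have "\<dots> \<le> (\<Sum>i\<in>I. \<bar>t\<bar>^3 / 12 * (d * v i + m i / d) + t^4 / 8 * m i)"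
    by (rule sum_mono) (unfold w_def v_def m_def, rule char_term_bound[OF rv i4 mean d])
  also have "\<dots> = (\<Sum>i\<in>I. (\<bar>t\<bar>^3 / 12 * d) * v i + (\<bar>t\<bar>^3 / (12 * d) + t^4 / 8) * m i)"
    by (rule sum.cong) (use d in \<open>auto simp: field_simps\<close>)
  also have "\<dots> = (\<bar>t\<bar>^3 / 12 * d) * (\<Sum>i\<in>I. v i) + (\<bar>t\<bar>^3 / (12 * d) + t^4 / 8) * (\<Sum>i\<in>I. m i)"
    by (simp add: sum.distrib sum_distrib_left)
  also have "\<dots> \<le> \<bar>t\<bar>^3 / 12 * (d + L / d) + t^4 / 8 * L"
  proof -
    have sv: "(\<Sum>i\<in>I. v i) = 1" using var by (simp add: v_def)
    have sm: "(\<Sum>i\<in>I. m i) \<le> L" using L by (simp add: m_def)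
    have "(\<bar>t\<bar>^3 / (12 * d) + t^4 / 8) * (\<Sum>i\<in>I. m i) \<le> (\<bar>t\<bar>^3 / (12 * d) + t^4 / 8) * L"
      using sm d by (intro mult_left_mono) auto
    moreover have "\<bar>t\<bar>^3 / 12 * (d + L / d) + t^4 / 8 * L = (\<bar>t\<bar>^3 / 12 * d) * 1 + (\<bar>t\<bar>^3 / (12 * d) + t^4 / 8) * L"
      using d by (simp add: field_simps)
    ultimately show ?thesis unfolding sv by linarith
  qed
  finally show ?thesis unfolding ch ex .
qed

lemma clt_lyap:
  fixes M :: "nat \<Rightarrow> 'a measure" and I :: "nat \<Rightarrow> 'i set" and Z :: "nat \<Rightarrow> 'i \<Rightarrow> 'a \<Rightarrow> real"
    and L :: "nat \<Rightarrow> real"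
  assumes prob: "\<And>k. prob_space (M k)"
    and meas: "\<And>k. (\<lambda>\<omega>. \<Sum>i\<in>I k. Z k i \<omega>) \<in> borel_measurable (M k)"
    and ev: "eventually (\<lambda>k. finite (I k) \<and> prob_space.indep_vars (M k) (\<lambda>_. borel) (Z k) (I k)
      \<and> (\<forall>i\<in>I k. integrable (M k) (\<lambda>\<omega>. Z k i \<omega> ^ 4) \<and> (\<integral>\<omega>. Z k i \<omega> \<partial>M k) = 0)
      \<and> (\<Sum>i\<in>I k. \<integral>\<omega>. Z k i \<omega> ^ 2 \<partial>M k) = 1
      \<and> (\<Sum>i\<in>I k. \<integral>\<omega>. Z k i \<omega> ^ 4 \<partial>M k) \<le> L k) sequentially"
    and L: "L \<longlonglongrightarrow> 0"
  shows "weak_conv_m (\<lambda>k. distr (M k) borel (\<lambda>\<omega>. \<Sum>i\<in>I k. Z k i \<omega>)) std_normal_distribution"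
proof (rule levy_continuity)
  show "real_distribution (distr (M k) borel (\<lambda>\<omega>. \<Sum>i\<in>I k. Z k i \<omega>))" for k
    by (rule prob_space.real_distribution_distr[OF prob meas])
  show "real_distribution std_normal_distribution" by (rule real_dist_normal_dist)
  fix t :: real
  define c where "c = complex_of_real (exp (- (t^2) / 2))"
  let ?ch = "\<lambda>k. char (distr (M k) borel (\<lambda>\<omega>. \<Sum>i\<in>I k. Z k i \<omega>)) t"
  have "?ch \<longlonglongrightarrow> c"
  proof (rule tendstoI)
    fix e :: real assume e: "e > 0"
    define d where "d = 6 * e / (\<bar>t\<bar>^3 + 1)"
    have t0: "0 \<le> \<bar>t\<bar>^3" by simp
    then have p: "0 < \<bar>t\<bar>^3 + 1" by linarith
    have d0: "d > 0" using e p by (simp add: d_def)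
    define K where "K = \<bar>t\<bar>^3 / (12 * d) + t^4 / 8"
    have "(\<lambda>k. K * L k) \<longlonglongrightarrow> K * 0" by (intro tendsto_intros L)
    from order_tendstoD(2)[OF this, of "e / 2"] e
    have evK: "eventually (\<lambda>k. K * L k < e / 2) sequentially" by simp
    have td: "\<bar>t\<bar>^3 / 12 * d < e / 2"
    proof -
      have "\<bar>t\<bar>^3 / 12 * d = e / 2 * (\<bar>t\<bar>^3 / (\<bar>t\<bar>^3 + 1))"
        by (simp add: d_def field_simps)
      also have "\<dots> < e / 2 * 1" using e p by (intro mult_strict_left_mono) (auto simp: divide_less_eq)
      finally show ?thesis by simp
    qed
    show "eventually (\<lambda>k. dist (?ch k) c < e) sequentially"
      using ev evK
    proof eventually_elim
      case (elim k)
      interpret prob_space "M k" by (rule prob)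
      have "cmod (?ch k - c) \<le> \<bar>t\<bar>^3 / 12 * (d + L k / d) + t^4 / 8 * L k"
        unfolding c_def by (rule char_sum_bound) (use elim d0 in auto)
      also have "\<dots> = \<bar>t\<bar>^3 / 12 * d + K * L k"
        using d0 by (simp add: K_def field_simps)
      also have "\<dots> < e" using td elim by linarith
      finally show ?case by (simp add: dist_norm)
    qed
  qed
  then show "?ch \<longlonglongrightarrow> char std_normal_distribution t"
    by (simp add: char_std_normal_distribution c_def)
qed

lemma sq3: fixes a b c :: real shows "(a + b + c)^2 \<le> 3 * (a^2 + b^2 + c^2)"
proof -
  have "3 * (a^2 + b^2 + c^2) - (a + b + c)^2 = (a - b)^2 + (b - c)^2 + (c - a)^2"
    by (simp add: power2_eq_square algebra_simps)
  moreover have "0 \<le> (a - b)^2 + (b - c)^2 + (c - a)^2" by simp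
  ultimately show ?thesis by linarith
qed

lemma pow4_3: fixes a b c :: real shows "(a + b + c)^4 \<le> 27 * (a^4 + b^4 + c^4)"
proof -
  have "(a + b + c)^4 = ((a + b + c)^2)^2" by simp
  also have "\<dots> \<le> (3 * (a^2 + b^2 + c^2))^2" by (rule power_mono[OF sq3]) simp
  also have "\<dots> = 9 * (a^2 + b^2 + c^2)^2" by (simp only: power_mult_distrib) simp
  also have "\<dots> \<le> 9 * (3 * ((a^2)^2 + (b^2)^2 + (c^2)^2))" using sq3[of "a^2" "b^2" "c^2"] by simp
  finally show ?thesis by simp
qed

lemma (in prob_space) indep_prod:
  fixes g h :: "nat \<Rightarrow> real"
  assumes ind: "indep_var (count_space UNIV) Y1 (count_space UNIV) Y2"
    and i1: "integrable M (\<lambda>\<omega>. g (Y1 \<omega>))" and i2: "integrable M (\<lambda>\<omega>. h (Y2 \<omega>))"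
  shows "integrable M (\<lambda>\<omega>. g (Y1 \<omega>) * h (Y2 \<omega>))"
    "(\<integral>\<omega>. g (Y1 \<omega>) * h (Y2 \<omega>) \<partial>M) = (\<integral>\<omega>. g (Y1 \<omega>) \<partial>M) * (\<integral>\<omega>. h (Y2 \<omega>) \<partial>M)"
proof -
  have "indep_var borel (g \<circ> Y1) borel (h \<circ> Y2)"
    by (rule indep_var_compose[OF ind]) auto
  then have iv: "indep_var borel (\<lambda>\<omega>. g (Y1 \<omega>)) borel (\<lambda>\<omega>. h (Y2 \<omega>))" by (simp add: comp_def)
  show "integrable M (\<lambda>\<omega>. g (Y1 \<omega>) * h (Y2 \<omega>))" by (rule indep_var_integrable[OF iv i1 i2])
  show "(\<integral>\<omega>. g (Y1 \<omega>) * h (Y2 \<omega>) \<partial>M) = (\<integral>\<omega>. g (Y1 \<omega>) \<partial>M) * (\<integral>\<omega>. h (Y2 \<omega>) \<partial>M)"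
    by (rule indep_var_lebesgue_integral[OF iv i1 i2])
qed

locale pois2 = P1: pois M Y1 l1 + P2: pois M Y2 l2
  for M :: "'a measure" and Y1 Y2 :: "'a \<Rightarrow> nat" and l1 l2 :: real +
  assumes ind: "prob_space.indep_var M (count_space UNIV) Y1 (count_space UNIV) Y2"
begin

definition T :: "real \<Rightarrow> real \<Rightarrow> 'a \<Rightarrow> real" where
  "T a b \<omega> = a^2 * ((real (Y1 \<omega>) - l1)^2 - real (Y1 \<omega>)) + b^2 * ((real (Y2 \<omega>) - l2)^2 - real (Y2 \<omega>))
     - 2 * a * b * ((real (Y1 \<omega>) - l1) * (real (Y2 \<omega>) - l2))"

lemma T_meas[measurable]: "T a b \<in> borel_measurable M"
  unfolding T_def by measurable

lemmas ip = P1.indep_prod[OF ind]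

lemma T_int: "integrable M (T a b)"
  unfolding T_def using P1.int_W P2.int_W ip(1)[OF P1.int_A P2.int_A] by auto

lemma T_mean: "(\<integral>\<omega>. T a b \<omega> \<partial>M) = 0"
  unfolding T_def using P1.int_W P2.int_W ip[OF P1.int_A P2.int_A] P1.E_W P2.E_W P1.E_A P2.E_A by simp

lemma T_sq: "(\<integral>\<omega>. (T a b \<omega>)^2 \<partial>M) = 2 * (a^2 * l1 + b^2 * l2)^2"
proof -
  let ?A1 = "\<lambda>\<omega>. real (Y1 \<omega>) - l1" and ?A2 = "\<lambda>\<omega>. real (Y2 \<omega>) - l2"
  let ?W1 = "\<lambda>\<omega>. (real (Y1 \<omega>) - l1)^2 - real (Y1 \<omega>)" and ?W2 = "\<lambda>\<omega>. (real (Y2 \<omega>) - l2)^2 - real (Y2 \<omega>)"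
  have e: "(T a b \<omega>)^2 = a^4 * (?W1 \<omega>)^2 + b^4 * (?W2 \<omega>)^2 + 4 * a^2 * b^2 * ((?A1 \<omega>)^2 * (?A2 \<omega>)^2)
     + 2 * a^2 * b^2 * (?W1 \<omega> * ?W2 \<omega>) - 4 * a^3 * b * ((?W1 \<omega> * ?A1 \<omega>) * ?A2 \<omega>)
     - 4 * a * b^3 * (?A1 \<omega> * (?W2 \<omega> * ?A2 \<omega>))" for \<omega>
    unfolding T_def by (simp add: power2_eq_square eval_nat_numeral algebra_simps)
  note i1 = ip[OF P1.int_A2 P2.int_A2] and i2 = ip[OF P1.int_W P2.int_W]
    and i3 = ip[OF P1.int_WA P2.int_A] and i4 = ip[OF P1.int_A P2.int_WA]
  have "(\<integral>\<omega>. (T a b \<omega>)^2 \<partial>M) = a^4 * (2 * l1^2) + b^4 * (2 * l2^2) + 4 * a^2 * b^2 * (l1 * l2)"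
    unfolding e using P1.int_W2 P2.int_W2 i1 i2 i3 i4 P1.E_W2 P2.E_W2 P1.E_A2 P2.E_A2 P1.E_W P2.E_W P1.E_A P2.E_A
    by simp
  also have "\<dots> = 2 * (a^2 * l1 + b^2 * l2)^2" by (simp add: power2_eq_square eval_nat_numeral algebra_simps)
  finally show ?thesis .
qed

lemma T4_bound: "(T a b \<omega>)^4 \<le> 27 * (a^8 * ((real (Y1 \<omega>) - l1)^2 - real (Y1 \<omega>))^4
    + b^8 * ((real (Y2 \<omega>) - l2)^2 - real (Y2 \<omega>))^4 + 16 * a^4 * b^4 * ((real (Y1 \<omega>) - l1)^4 * (real (Y2 \<omega>) - l2)^4))"
proof -
  have "(T a b \<omega>)^4 = (a^2 * ((real (Y1 \<omega>) - l1)^2 - real (Y1 \<omega>)) + b^2 * ((real (Y2 \<omega>) - l2)^2 - real (Y2 \<omega>))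
     + (- 2 * a * b * ((real (Y1 \<omega>) - l1) * (real (Y2 \<omega>) - l2))))^4" unfolding T_def by simp
  also have "\<dots> \<le> 27 * ((a^2 * ((real (Y1 \<omega>) - l1)^2 - real (Y1 \<omega>)))^4 + (b^2 * ((real (Y2 \<omega>) - l2)^2 - real (Y2 \<omega>)))^4
     + (- 2 * a * b * ((real (Y1 \<omega>) - l1) * (real (Y2 \<omega>) - l2)))^4)" by (rule pow4_3)
  also have "\<dots> = 27 * (a^8 * ((real (Y1 \<omega>) - l1)^2 - real (Y1 \<omega>))^4
    + b^8 * ((real (Y2 \<omega>) - l2)^2 - real (Y2 \<omega>))^4 + 16 * a^4 * b^4 * ((real (Y1 \<omega>) - l1)^4 * (real (Y2 \<omega>) - l2)^4))"
    by (simp add: power_mult_distrib flip: power_mult)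
  finally show ?thesis .
qed

lemma T4: "integrable M (\<lambda>\<omega>. (T a b \<omega>)^4)"
    "(\<integral>\<omega>. (T a b \<omega>)^4 \<partial>M) \<le> 27 * (a^8 * (8 * l1^2 + 144 * l1^3 + 60 * l1^4)
      + b^8 * (8 * l2^2 + 144 * l2^3 + 60 * l2^4) + 16 * a^4 * b^4 * ((l1 + 3 * l1^2) * (l2 + 3 * l2^2)))"
proof -
  note i = ip[OF P1.int_A4 P2.int_A4]
  have ib: "integrable M (\<lambda>\<omega>. 27 * (a^8 * ((real (Y1 \<omega>) - l1)^2 - real (Y1 \<omega>))^4
    + b^8 * ((real (Y2 \<omega>) - l2)^2 - real (Y2 \<omega>))^4 + 16 * a^4 * b^4 * ((real (Y1 \<omega>) - l1)^4 * (real (Y2 \<omega>) - l2)^4)))"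
    using P1.int_W4 P2.int_W4 i by simp
  show i4: "integrable M (\<lambda>\<omega>. (T a b \<omega>)^4)"
  proof (rule Bochner_Integration.integrable_bound[OF ib])
    show "AE \<omega> in M. norm ((T a b \<omega>)^4) \<le> norm (27 * (a^8 * ((real (Y1 \<omega>) - l1)^2 - real (Y1 \<omega>))^4
    + b^8 * ((real (Y2 \<omega>) - l2)^2 - real (Y2 \<omega>))^4 + 16 * a^4 * b^4 * ((real (Y1 \<omega>) - l1)^4 * (real (Y2 \<omega>) - l2)^4)))"
    proof (rule AE_I2)
      fix \<omega>
      have "0 \<le> (T a b \<omega>)^4" by simp
      with T4_bound[of a b \<omega>] show "norm ((T a b \<omega>)^4) \<le> norm (27 * (a^8 * ((real (Y1 \<omega>) - l1)^2 - real (Y1 \<omega>))^4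
    + b^8 * ((real (Y2 \<omega>) - l2)^2 - real (Y2 \<omega>))^4 + 16 * a^4 * b^4 * ((real (Y1 \<omega>) - l1)^4 * (real (Y2 \<omega>) - l2)^4)))"
        unfolding real_norm_def by linarith
    qed
  qed simp
  have "(\<integral>\<omega>. (T a b \<omega>)^4 \<partial>M) \<le> (\<integral>\<omega>. 27 * (a^8 * ((real (Y1 \<omega>) - l1)^2 - real (Y1 \<omega>))^4
    + b^8 * ((real (Y2 \<omega>) - l2)^2 - real (Y2 \<omega>))^4 + 16 * a^4 * b^4 * ((real (Y1 \<omega>) - l1)^4 * (real (Y2 \<omega>) - l2)^4)) \<partial>M)"
    by (rule integral_mono[OF i4 ib T4_bound])
  also have "\<dots> = 27 * (a^8 * (8 * l1^2 + 144 * l1^3 + 60 * l1^4)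
      + b^8 * (8 * l2^2 + 144 * l2^3 + 60 * l2^4) + 16 * a^4 * b^4 * ((l1 + 3 * l1^2) * (l2 + 3 * l2^2)))"
    using P1.int_W4 P2.int_W4 i P1.E_W4 P2.E_W4 P1.E_A4 P2.E_A4 by simp
  finally show "(\<integral>\<omega>. (T a b \<omega>)^4 \<partial>M) \<le> 27 * (a^8 * (8 * l1^2 + 144 * l1^3 + 60 * l1^4)
      + b^8 * (8 * l2^2 + 144 * l2^3 + 60 * l2^4) + 16 * a^4 * b^4 * ((l1 + 3 * l1^2) * (l2 + 3 * l2^2)))" .
qed

end

lemma fi_T:
  fixes n1 n2 :: nat and p1 p2 x1 x2 :: real
  assumes "n1 > 0" "n2 > 0"
  shows "fi n1 n2 (p1 - p2) x1 x2 = (1 / real n1)^2 * ((x1 - real n1 * p1)^2 - x1)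
     + (1 / real n2)^2 * ((x2 - real n2 * p2)^2 - x2)
     - 2 * (1 / real n1) * (1 / real n2) * ((x1 - real n1 * p1) * (x2 - real n2 * p2))"
  using assms unfolding fi_def fstar_def
  by (simp add: field_simps power2_eq_square)

lemma hb:
  fixes n m x q :: real
  assumes m: "0 < m" "m \<le> n" and x: "0 \<le> x" "x \<le> q"
  shows "x^2 / n^4 \<le> q^2 / m^4" "x^3 / n^2 \<le> (q^2 / m^4 + q^4) / 2" "x^4 \<le> q^4"
    "x / n^2 + 3 * x^2 \<le> q / m^2 + 3 * q^2"
proof -
  have n: "0 < n" using m by simp
  have "x^2 \<le> q^2" using x by (intro power_mono) auto
  moreover have "m^4 \<le> n^4" using m by (intro power_mono) auto
  ultimately show h1: "x^2 / n^4 \<le> q^2 / m^4"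
    using m n x by (intro frac_le) auto
  show h3: "x^4 \<le> q^4" using x by (intro power_mono) auto
  have "2 * (x / n^2) * x^2 \<le> (x / n^2)^2 + (x^2)^2"
    using sum_squares_bound[of "x / n^2" "x^2"] by (simp add: power2_eq_square)
  then have "x^3 / n^2 \<le> (x^2 / n^4 + x^4) / 2"
    using n by (simp add: field_simps power2_eq_square eval_nat_numeral)
  moreover have "(x^2 / n^4 + x^4) / 2 \<le> (q^2 / m^4 + q^4) / 2"
    using h1 h3 by (intro divide_right_mono add_mono) auto
  ultimately show "x^3 / n^2 \<le> (q^2 / m^4 + q^4) / 2" by (rule order_trans)
  have "x / n^2 \<le> q / m^2"
    using m n x by (intro frac_le) (auto intro: power_mono)
  moreover have "x^2 \<le> q^2" using x by (intro power_mono) auto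
  ultimately show "x / n^2 + 3 * x^2 \<le> q / m^2 + 3 * q^2" by linarith
qed

lemma sq2: fixes a b :: real shows "(a + b) * (a + b) \<le> 2 * a^2 + 2 * b^2"
proof -
  have "0 \<le> (a - b) * (a - b)" by simp
  then show ?thesis by (simp add: power2_eq_square algebra_simps)
qed

lemma lin_key: fixes a1 a2 a3 b1 b2 b3 c A B :: real
  assumes "a1 \<le> A" "a2 \<le> (A + B) / 2" "a3 \<le> B" "b1 \<le> A" "b2 \<le> (A + B) / 2" "b3 \<le> B"
    "c \<le> 2 * A + 18 * B" "0 \<le> A" "0 \<le> B"
  shows "27 * (8 * a1 + 144 * a2 + 60 * a3 + (8 * b1 + 144 * b2 + 60 * b3) + 16 * c) \<le> 15000 * (A + B)"
  using assms by (simp add: algebra_simps)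

lemma B_bound:
  fixes n1 n2 m p1 p2 :: real
  assumes m: "0 < m" "m \<le> n1" "m \<le> n2" and p: "0 \<le> p1" "0 \<le> p2"
  shows "27 * ((1/n1)^8 * (8 * (n1*p1)^2 + 144 * (n1*p1)^3 + 60 * (n1*p1)^4)
      + (1/n2)^8 * (8 * (n2*p2)^2 + 144 * (n2*p2)^3 + 60 * (n2*p2)^4)
      + 16 * (1/n1)^4 * (1/n2)^4 * ((n1*p1 + 3 * (n1*p1)^2) * (n2*p2 + 3 * (n2*p2)^2)))
    \<le> 15000 * ((p1/n1 + p2/n2)^2 / m^4 + (p1/n1 + p2/n2)^4)"
proof -
  have n1: "0 < n1" and n2: "0 < n2" using m by auto
  define u where "u = p1 / n1"
  define w where "w = p2 / n2"
  define q where "q = u + w"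
  have u0: "0 \<le> u" and w0: "0 \<le> w" using p n1 n2 by (auto simp: u_def w_def)
  have uq: "u \<le> q" and wq: "w \<le> q" using u0 w0 by (auto simp: q_def)
  have e1: "(1/n1)^8 * (8 * (n1*p1)^2 + 144 * (n1*p1)^3 + 60 * (n1*p1)^4) = 8 * (u^2/n1^4) + 144 * (u^3/n1^2) + 60 * u^4"
    using n1 by (simp add: u_def field_simps eval_nat_numeral)
  have e2: "(1/n2)^8 * (8 * (n2*p2)^2 + 144 * (n2*p2)^3 + 60 * (n2*p2)^4) = 8 * (w^2/n2^4) + 144 * (w^3/n2^2) + 60 * w^4"
    using n2 by (simp add: w_def field_simps eval_nat_numeral)
  have e3: "16 * (1/n1)^4 * (1/n2)^4 * ((n1*p1 + 3 * (n1*p1)^2) * (n2*p2 + 3 * (n2*p2)^2))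
     = 16 * ((u / n1^2 + 3 * u^2) * (w / n2^2 + 3 * w^2))"
    using n1 n2 by (simp add: u_def w_def field_simps eval_nat_numeral)
  define A where "A = q^2 / m^4"
  define B where "B = q^4"
  have A0: "0 \<le> A" and B0: "0 \<le> B" by (auto simp: A_def B_def q_def)
  note hu = hb[OF m(1,2) u0 uq, folded A_def B_def] and hw = hb[OF m(1,3) w0 wq, folded A_def B_def]
  have c0: "0 \<le> u / n1^2 + 3 * u^2" "0 \<le> w / n2^2 + 3 * w^2" using u0 w0 n1 n2 by auto
  have "(u / n1^2 + 3 * u^2) * (w / n2^2 + 3 * w^2) \<le> (q / m^2 + 3 * q^2) * (q / m^2 + 3 * q^2)"
    using hu(4) hw(4) c0 by (intro mult_mono) auto
  also have "\<dots> \<le> 2 * (q / m^2)^2 + 2 * (3 * q^2)^2"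
    by (rule sq2)
  also have "\<dots> = 2 * A + 18 * B" by (simp add: A_def B_def power2_eq_square eval_nat_numeral field_simps)
  finally have cr: "(u / n1^2 + 3 * u^2) * (w / n2^2 + 3 * w^2) \<le> 2 * A + 18 * B" .
  have "27 * (8 * (u^2/n1^4) + 144 * (u^3/n1^2) + 60 * u^4 + (8 * (w^2/n2^4) + 144 * (w^3/n2^2) + 60 * w^4)
      + 16 * ((u / n1^2 + 3 * u^2) * (w / n2^2 + 3 * w^2))) \<le> 15000 * (A + B)"
    by (rule lin_key[OF hu(1-3) hw(1-3) cr A0 B0])
  then show ?thesis unfolding e1 e2 e3 by (simp add: A_def B_def q_def u_def w_def)
qed

lemma sum_bound:
  fixes p1 p2 :: "nat \<Rightarrow> real" and k :: nat and n1 n2 m N \<epsilon> :: real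
  assumes k: "1 \<le> k" and m: "0 < m" "m \<le> n1" "m \<le> n2" and N: "n1 \<le> N" "n2 \<le> N"
    and p: "\<And>i. i \<in> {1..k} \<Longrightarrow> 0 \<le> p1 i \<and> 0 \<le> p2 i"
    and s1: "(\<Sum>i=1..k. p1 i) = 1" and s2: "(\<Sum>i=1..k. p2 i) = 1"
    and e: "0 < \<epsilon>" "\<epsilon> \<le> N * (\<Sum>i=1..k. (p1 i + p2 i)^2)"
  shows "0 < (\<Sum>i=1..k. (p1 i / n1 + p2 i / n2)^2)"
    "15000 * ((\<Sum>i=1..k. (p1 i / n1 + p2 i / n2)^2) / m^4 + (\<Sum>i=1..k. (p1 i / n1 + p2 i / n2)^4))
        / (4 * (\<Sum>i=1..k. (p1 i / n1 + p2 i / n2)^2)^2)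
       \<le> 15000 / 4 * (N^3 / (\<epsilon> * m^4) + 2 * N^2 / m^2 * ((MAX i\<in>{1..k}. (p1 i)^2) / (\<Sum>i=1..k. (p1 i)^2)
          + (MAX i\<in>{1..k}. (p2 i)^2) / (\<Sum>i=1..k. (p2 i)^2)))"
proof -
  define q where "q i = p1 i / n1 + p2 i / n2" for i
  define Qv where "Qv = (\<Sum>i=1..k. (q i)^2)"
  define S where "S = (\<Sum>i=1..k. (p1 i + p2 i)^2)"
  define S1 where "S1 = (\<Sum>i=1..k. (p1 i)^2)"
  define S2 where "S2 = (\<Sum>i=1..k. (p2 i)^2)"
  define MX1 where "MX1 = (MAX i\<in>{1..k}. (p1 i)^2)"
  define MX2 where "MX2 = (MAX i\<in>{1..k}. (p2 i)^2)"
  have n1: "0 < n1" and n2: "0 < n2" and N0: "0 < N" using m N by auto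
  have S1pos: "0 < S1"
  proof -
    have "0 \<le> S1" unfolding S1_def by (simp add: sum_nonneg)
    moreover have "S1 \<noteq> 0"
    proof
      assume "S1 = 0"
      then have "\<forall>i\<in>{1..k}. (p1 i)^2 = 0" unfolding S1_def by (subst (asm) sum_nonneg_eq_0_iff) auto
      then have "(\<Sum>i=1..k. p1 i) = 0" by simp
      with s1 show False by simp
    qed
    ultimately show ?thesis by simp
  qed
  have S2pos: "0 < S2"
  proof -
    have "0 \<le> S2" unfolding S2_def by (simp add: sum_nonneg)
    moreover have "S2 \<noteq> 0"
    proof
      assume "S2 = 0"
      then have "\<forall>i\<in>{1..k}. (p2 i)^2 = 0" unfolding S2_def by (subst (asm) sum_nonneg_eq_0_iff) auto
      then have "(\<Sum>i=1..k. p2 i) = 0" by simp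
      with s2 show False by simp
    qed
    ultimately show ?thesis by simp
  qed
  have SS1: "S1 \<le> S" unfolding S1_def S_def
    by (rule sum_mono) (use p in \<open>auto intro!: power_mono\<close>)
  have SS2: "S2 \<le> S" unfolding S2_def S_def
    by (rule sum_mono) (use p in \<open>auto intro!: power_mono\<close>)
  have Spos: "0 < S" using S1pos SS1 by simp
  have qlow: "((p1 i + p2 i) / N)^2 \<le> (q i)^2" if i: "i \<in> {1..k}" for i
  proof -
    have "p1 i / N \<le> p1 i / n1" using p[OF i] n1 N by (intro divide_left_mono) auto
    moreover have "p2 i / N \<le> p2 i / n2" using p[OF i] n2 N by (intro divide_left_mono) auto
    ultimately have "(p1 i + p2 i) / N \<le> q i" by (simp add: q_def add_divide_distrib)
    moreover have "0 \<le> (p1 i + p2 i) / N" using p[OF i] N0 by simp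
    ultimately show ?thesis by (intro power_mono) auto
  qed
  have QS: "S / N^2 \<le> Qv"
  proof -
    have "S / N^2 = (\<Sum>i=1..k. ((p1 i + p2 i) / N)^2)" unfolding S_def
      by (simp add: sum_divide_distrib power_divide)
    also have "\<dots> \<le> Qv" unfolding Qv_def by (rule sum_mono) (rule qlow)
    finally show ?thesis .
  qed
  have Qpos: "0 < Qv" using QS Spos N0 by (smt (verit) divide_pos_pos zero_less_power)
  then show "0 < (\<Sum>i=1..k. (p1 i / n1 + p2 i / n2)^2)" by (simp add: Qv_def q_def)
  define c where "c = 2 * (MX1 + MX2) / m^2"
  have qhigh: "(q i)^2 \<le> c" if i: "i \<in> {1..k}" for i
  proof -
    have "p1 i / n1 \<le> p1 i / m" using p[OF i] m by (intro divide_left_mono) auto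
    moreover have "p2 i / n2 \<le> p2 i / m" using p[OF i] m by (intro divide_left_mono) auto
    ultimately have "q i \<le> (p1 i + p2 i) / m" by (simp add: q_def add_divide_distrib)
    moreover have "0 \<le> q i" using p[OF i] n1 n2 by (simp add: q_def)
    ultimately have "(q i)^2 \<le> ((p1 i + p2 i) / m)^2" by (intro power_mono) auto
    also have "\<dots> = (p1 i + p2 i)^2 / m^2" by (simp add: power_divide)
    also have "\<dots> \<le> 2 * ((p1 i)^2 + (p2 i)^2) / m^2"
    proof -
      have "(p1 i + p2 i)^2 \<le> 2 * ((p1 i)^2 + (p2 i)^2)"
      proof -
        have "0 \<le> (p1 i - p2 i)^2" by simp
        then show ?thesis by (simp add: power2_eq_square algebra_simps)
      qed
      then show ?thesis by (intro divide_right_mono) auto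
    qed
    also have "\<dots> \<le> 2 * (MX1 + MX2) / m^2"
    proof -
      have "(p1 i)^2 \<le> MX1" unfolding MX1_def by (rule Max_ge) (use i in auto)
      moreover have "(p2 i)^2 \<le> MX2" unfolding MX2_def by (rule Max_ge) (use i in auto)
      ultimately show ?thesis by (intro divide_right_mono) auto
    qed
    finally show ?thesis by (simp add: c_def)
  qed
  have q4: "(\<Sum>i=1..k. (q i)^4) \<le> c * Qv"
  proof -
    have "(\<Sum>i=1..k. (q i)^4) \<le> (\<Sum>i=1..k. c * (q i)^2)"
    proof (rule sum_mono)
      fix i assume i: "i \<in> {1..k}"
      have "(q i)^4 = (q i)^2 * (q i)^2" by (simp add: eval_nat_numeral)
      also have "\<dots> \<le> c * (q i)^2" by (rule mult_right_mono[OF qhigh[OF i]]) simp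
      finally show "(q i)^4 \<le> c * (q i)^2" .
    qed
    also have "\<dots> = c * Qv" by (simp add: Qv_def sum_distrib_left)
    finally show ?thesis .
  qed
  have MXnn: "0 \<le> MX1" "0 \<le> MX2"
  proof -
    have "(p1 1)^2 \<le> MX1" unfolding MX1_def by (rule Max_ge) (use k in auto)
    then show "0 \<le> MX1" by (smt (verit) zero_le_power2)
    have "(p2 1)^2 \<le> MX2" unfolding MX2_def by (rule Max_ge) (use k in auto)
    then show "0 \<le> MX2" by (smt (verit) zero_le_power2)
  qed
  have invQ: "1 / Qv \<le> N^3 / \<epsilon>"
  proof -
    have "1 / Qv \<le> 1 / (S / N^2)" using QS Spos N0 Qpos by (intro divide_left_mono) auto
    also have "\<dots> = N^2 / S" by simp
    also have "\<dots> \<le> N^2 / (\<epsilon> / N)"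
    proof -
      have "\<epsilon> / N \<le> S" using e N0 by (simp add: divide_le_eq mult.commute S_def)
      then show ?thesis using e N0 Spos by (intro divide_left_mono) auto
    qed
    also have "\<dots> = N^3 / \<epsilon>" using N0 by (simp add: field_simps eval_nat_numeral)
    finally show ?thesis .
  qed
  have MXQ: "(MX1 + MX2) / Qv \<le> N^2 * (MX1 / S1 + MX2 / S2)"
  proof -
    have "(MX1 + MX2) / Qv \<le> (MX1 + MX2) / (S / N^2)" using QS Spos N0 MXnn Qpos by (intro divide_left_mono) auto
    also have "\<dots> = N^2 * (MX1 / S + MX2 / S)" using N0 Spos by (simp add: field_simps)
    also have "\<dots> \<le> N^2 * (MX1 / S1 + MX2 / S2)"
      using MXnn S1pos S2pos SS1 SS2 by (intro mult_left_mono add_mono divide_left_mono) auto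
    finally show ?thesis .
  qed
  have "15000 * (Qv / m^4 + (\<Sum>i=1..k. (q i)^4)) / (4 * Qv^2) \<le> 15000 * (Qv / m^4 + c * Qv) / (4 * Qv^2)"
    using q4 Qpos by (intro divide_right_mono mult_left_mono add_left_mono) auto
  also have "\<dots> = 15000 / 4 * (1 / Qv / m^4 + 2 / m^2 * ((MX1 + MX2) / Qv))"
    using Qpos m by (simp add: c_def field_simps power2_eq_square)
  also have "\<dots> \<le> 15000 / 4 * (N^3 / \<epsilon> / m^4 + 2 / m^2 * (N^2 * (MX1 / S1 + MX2 / S2)))"
    using invQ MXQ m by (intro mult_left_mono add_mono divide_right_mono) auto
  also have "\<dots> = 15000 / 4 * (N^3 / (\<epsilon> * m^4) + 2 * N^2 / m^2 * (MX1 / S1 + MX2 / S2))"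
    by (simp add: field_simps)
  finally show "15000 * ((\<Sum>i=1..k. (p1 i / n1 + p2 i / n2)^2) / m^4 + (\<Sum>i=1..k. (p1 i / n1 + p2 i / n2)^4))
        / (4 * (\<Sum>i=1..k. (p1 i / n1 + p2 i / n2)^2)^2)
       \<le> 15000 / 4 * (N^3 / (\<epsilon> * m^4) + 2 * N^2 / m^2 * ((MAX i\<in>{1..k}. (p1 i)^2) / (\<Sum>i=1..k. (p1 i)^2)
          + (MAX i\<in>{1..k}. (p2 i)^2) / (\<Sum>i=1..k. (p2 i)^2)))"
    by (simp add: Qv_def q_def MX1_def MX2_def S1_def S2_def)
qed

lemma L_lim:
  fixes n1 n2 :: "nat \<Rightarrow> nat" and R1 R2 :: "nat \<Rightarrow> real" and c \<epsilon> :: real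
  assumes cond1a: "filterlim (\<lambda>k. min (n1 k) (n2 k)) at_top sequentially"
    and cond1b: "(\<lambda>k. real (n1 k) / real (n1 k + n2 k)) \<longlonglongrightarrow> c" and c: "0 < c" "c < 1"
    and R1: "R1 \<longlonglongrightarrow> 0" and R2: "R2 \<longlonglongrightarrow> 0" and e: "0 < \<epsilon>"
  shows "(\<lambda>k. 15000 / 4 * (real (n1 k + n2 k)^3 / (\<epsilon> * real (min (n1 k) (n2 k))^4)
     + 2 * real (n1 k + n2 k)^2 / real (min (n1 k) (n2 k))^2 * (R1 k + R2 k))) \<longlonglongrightarrow> 0"
proof -
  define N where "N k = real (n1 k + n2 k)" for k
  define m where "m k = real (min (n1 k) (n2 k))" for k
  have mt: "filterlim m at_top sequentially" unfolding m_def
    by (rule filterlim_compose[OF filterlim_real_sequentially cond1a])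
  have im: "(\<lambda>k. inverse (m k)) \<longlonglongrightarrow> 0" by (rule tendsto_inverse_0_at_top[OF mt])
  have ev1: "eventually (\<lambda>k. 1 \<le> m k) sequentially" using mt by (simp add: filterlim_at_top)
  have "(\<lambda>k. min (real (n1 k) / N k) (1 - real (n1 k) / N k)) \<longlonglongrightarrow> min c (1 - c)"
    unfolding N_def by (intro tendsto_intros cond1b)
  moreover have "eventually (\<lambda>k. min (real (n1 k) / N k) (1 - real (n1 k) / N k) = m k / N k) sequentially"
    using ev1
  proof eventually_elim
    case (elim k)
    then have Np: "0 < N k" by (simp add: m_def N_def)
    have "1 - real (n1 k) / N k = real (n2 k) / N k" using Np by (simp add: N_def field_simps)
    then show ?case using Np by (auto simp: m_def min_def divide_right_mono divide_le_cancel)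
  qed
  ultimately have "(\<lambda>k. m k / N k) \<longlonglongrightarrow> min c (1 - c)" by (rule Lim_transform_eventually)
  then have "(\<lambda>k. inverse (m k / N k)) \<longlonglongrightarrow> inverse (min c (1 - c))"
    using c by (intro tendsto_inverse) auto
  then have Nm: "(\<lambda>k. N k / m k) \<longlonglongrightarrow> inverse (min c (1 - c))" by simp
  have e0: "\<epsilon> \<noteq> 0" using e by simp
  have eq: "15000 / 4 * (N k^3 / (\<epsilon> * m k^4) + 2 * N k^2 / m k^2 * (R1 k + R2 k))
     = 15000 / 4 * ((N k / m k)^3 * inverse (m k) / \<epsilon> + 2 * (N k / m k)^2 * (R1 k + R2 k))" for k
    using e by (cases "m k = 0") (simp_all add: field_simps eval_nat_numeral e0)
  have "(\<lambda>k. 15000 / 4 * ((N k / m k)^3 * inverse (m k) / \<epsilon> + 2 * (N k / m k)^2 * (R1 k + R2 k)))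
     \<longlonglongrightarrow> 15000 / 4 * ((inverse (min c (1 - c)))^3 * 0 / \<epsilon> + 2 * (inverse (min c (1 - c)))^2 * (0 + 0))"
    by (intro tendsto_intros Nm im R1 R2) (use e0 in auto)
  then show ?thesis unfolding eq[symmetric] by (simp add: N_def m_def)
qed

lemma (in prob_space) pair_indep:
  fixes U V :: "nat \<Rightarrow> 'a \<Rightarrow> nat" and J :: "nat set" and G :: "nat \<Rightarrow> nat \<Rightarrow> nat \<Rightarrow> real"
  assumes ind: "indep_vars (\<lambda>_. count_space UNIV) (\<lambda>(b, i). if b then U i else V i) (UNIV \<times> J)"
  shows pair_indep_var: "\<And>i. i \<in> J \<Longrightarrow> indep_var (count_space UNIV) (U i) (count_space UNIV) (V i)"
    and pair_measU: "\<And>i. i \<in> J \<Longrightarrow> U i \<in> measurable M (count_space UNIV)"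
    and pair_measV: "\<And>i. i \<in> J \<Longrightarrow> V i \<in> measurable M (count_space UNIV)"
    and pair_indep_vars: "indep_vars (\<lambda>_. borel) (\<lambda>i \<omega>. G i (U i \<omega>) (V i \<omega>)) J"
proof -
  let ?X = "\<lambda>(b, i). if b then U i else V i"
  have rv: "\<And>j. j \<in> UNIV \<times> J \<Longrightarrow> random_variable (count_space UNIV) (?X j)"
    using ind unfolding indep_vars_def2 by blast
  show mU: "U i \<in> measurable M (count_space UNIV)" if "i \<in> J" for i
    using rv[of "(True, i)"] that by simp
  show mV: "V i \<in> measurable M (count_space UNIV)" if "i \<in> J" for i
    using rv[of "(False, i)"] that by simp
  show "indep_var (count_space UNIV) (U i) (count_space UNIV) (V i)" if i: "i \<in> J" for i
  proof -
    have "indep_var (Pi\<^sub>M {(True, i)} (\<lambda>_. count_space UNIV)) (\<lambda>\<omega>. restrict (\<lambda>j. ?X j \<omega>) {(True, i)})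
        (Pi\<^sub>M {(False, i)} (\<lambda>_. count_space UNIV)) (\<lambda>\<omega>. restrict (\<lambda>j. ?X j \<omega>) {(False, i)})"
      by (rule indep_var_restrict[OF ind]) (use i in auto)
    then have "indep_var (count_space UNIV) ((\<lambda>f. f (True, i)) \<circ> (\<lambda>\<omega>. restrict (\<lambda>j. ?X j \<omega>) {(True, i)}))
        (count_space UNIV) ((\<lambda>f. f (False, i)) \<circ> (\<lambda>\<omega>. restrict (\<lambda>j. ?X j \<omega>) {(False, i)}))"
      by (rule indep_var_compose) (auto intro: measurable_component_singleton)
    also have "((\<lambda>f. f (True, i)) \<circ> (\<lambda>\<omega>. restrict (\<lambda>j. ?X j \<omega>) {(True, i)})) = U i" by (auto simp: fun_eq_iff)
    also have "((\<lambda>f. f (False, i)) \<circ> (\<lambda>\<omega>. restrict (\<lambda>j. ?X j \<omega>) {(False, i)})) = V i" by (auto simp: fun_eq_iff)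
    finally show ?thesis .
  qed
  define K where "K i = {(True, i), (False, i)}" for i :: nat
  have "indep_vars (\<lambda>i. Pi\<^sub>M (K i) (\<lambda>_. count_space UNIV)) (\<lambda>i \<omega>. restrict (\<lambda>j. ?X j \<omega>) (K i)) J"
    by (rule indep_vars_restrict[OF ind]) (auto simp: K_def disjoint_family_on_def)
  then have "indep_vars (\<lambda>_. borel) (\<lambda>i \<omega>. (\<lambda>f. G i (f (True, i)) (f (False, i))) (restrict (\<lambda>j. ?X j \<omega>) (K i))) J"
  proof (rule indep_vars_compose2)
    fix i assume "i \<in> J"
    have c1: "(\<lambda>f. f (True, i)) \<in> measurable (Pi\<^sub>M (K i) (\<lambda>_. count_space UNIV)) (count_space (UNIV :: nat set))"
      by (rule measurable_component_singleton) (simp add: K_def)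
    have c2: "(\<lambda>f. f (False, i)) \<in> measurable (Pi\<^sub>M (K i) (\<lambda>_. count_space UNIV)) (count_space (UNIV :: nat set))"
      by (rule measurable_component_singleton) (simp add: K_def)
    have "(\<lambda>f. G i n (f (False, i))) \<in> borel_measurable (Pi\<^sub>M (K i) (\<lambda>_. count_space UNIV))" for n
      using measurable_compose[OF c2, of "G i n" borel] by simp
    then show "(\<lambda>f. G i (f (True, i)) (f (False, i))) \<in> borel_measurable (Pi\<^sub>M (K i) (\<lambda>_. count_space UNIV))"
      by (rule measurable_compose_countable[OF _ c1])
  qed
  then show "indep_vars (\<lambda>_. borel) (\<lambda>i \<omega>. G i (U i \<omega>) (V i \<omega>)) J"
    by (rule indep_vars_cong[THEN iffD1, rotated 3]) (auto simp: K_def)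
qed

lemma meas2:
  fixes U V :: "'a \<Rightarrow> nat" and G :: "nat \<Rightarrow> nat \<Rightarrow> real"
  assumes U: "U \<in> measurable M (count_space UNIV)" and V: "V \<in> measurable M (count_space UNIV)"
  shows "(\<lambda>\<omega>. G (U \<omega>) (V \<omega>)) \<in> borel_measurable M"
proof -
  have "(\<lambda>\<omega>. G n (V \<omega>)) \<in> borel_measurable M" for n
    using measurable_compose[OF V, of "G n" borel] by simp
  then show ?thesis by (rule measurable_compose_countable[OF _ U])
qed

theorem lemma4:
  fixes n1 n2 :: "nat \<Rightarrow> nat"
    and p1 p2 :: "nat \<Rightarrow> nat \<Rightarrow> real"
    and c :: real
    and M :: "nat \<Rightarrow> 'a measure"
    and X1 X2 :: "nat \<Rightarrow> nat \<Rightarrow> 'a \<Rightarrow> nat"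
  assumes prob_vec1: "\<And>k. k \<ge> 1 \<Longrightarrow> (\<forall>i\<in>{1..k}. p1 k i \<ge> 0) \<and> (\<Sum>i=1..k. p1 k i) = 1"
    and prob_vec2: "\<And>k. k \<ge> 1 \<Longrightarrow> (\<forall>i\<in>{1..k}. p2 k i \<ge> 0) \<and> (\<Sum>i=1..k. p2 k i) = 1"
    and cond1a: "filterlim (\<lambda>k. min (n1 k) (n2 k)) at_top sequentially"
    and cond1b: "(\<lambda>k. real (n1 k) / real (n1 k + n2 k)) \<longlonglongrightarrow> c" and "0 < c" and "c < 1"
    and cond2a: "(\<lambda>k. (MAX i\<in>{1..k}. (p1 k i)^2) / (\<Sum>i=1..k. (p1 k i)^2)) \<longlonglongrightarrow> 0"
    and cond2b: "(\<lambda>k. (MAX i\<in>{1..k}. (p2 k i)^2) / (\<Sum>i=1..k. (p2 k i)^2)) \<longlonglongrightarrow> 0"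
    and cond3: "\<exists>\<epsilon>>0. \<forall>k\<ge>1. real (n1 k + n2 k) * (\<Sum>i=1..k. (p1 k i + p2 k i)^2) \<ge> \<epsilon>"
    and cond4: "(\<lambda>k. (real (n1 k + n2 k))^2 * (\<Sum>i=1..k. (p1 k i - p2 k i)^2)^2)
                  \<in> O(\<lambda>k. \<Sum>i=1..k. (p1 k i + p2 k i)^2)"
    and prob: "\<And>k. prob_space (M k)"
    and indep: "\<And>k. prob_space.indep_vars (M k) (\<lambda>_. count_space UNIV)
                  (\<lambda>(b, i). if b then X1 k i else X2 k i) (UNIV \<times> {1..k})"
    and pois1: "\<And>k i m. i \<in> {1..k} \<Longrightarrow>
                  measure (M k) {\<omega> \<in> space (M k). X1 k i \<omega> = m}
                    = (real (n1 k) * p1 k i)^m / fact m * exp (- (real (n1 k) * p1 k i))"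
    and pois2: "\<And>k i m. i \<in> {1..k} \<Longrightarrow>
                  measure (M k) {\<omega> \<in> space (M k). X2 k i \<omega> = m}
                    = (real (n2 k) * p2 k i)^m / fact m * exp (- (real (n2 k) * p2 k i))"
  shows "weak_conv_m
           (\<lambda>k. distr (M k) borel
              (\<lambda>\<omega>. (\<Sum>i=1..k. fi (n1 k) (n2 k) (p1 k i - p2 k i) (real (X1 k i \<omega>)) (real (X2 k i \<omega>)))
                     / sigma_k k (n1 k) (n2 k) (p1 k) (p2 k)))
           std_normal_distribution"
proof -
  obtain \<epsilon> where e: "\<epsilon> > 0" and e2: "\<And>k. k \<ge> 1 \<Longrightarrow> \<epsilon> \<le> real (n1 k + n2 k) * (\<Sum>i=1..k. (p1 k i + p2 k i)^2)"
    using cond3 by auto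
  define \<sigma> where "\<sigma> k = sigma_k k (n1 k) (n2 k) (p1 k) (p2 k)" for k
  define Z where "Z k i \<omega> = fi (n1 k) (n2 k) (p1 k i - p2 k i) (real (X1 k i \<omega>)) (real (X2 k i \<omega>)) / \<sigma> k" for k i \<omega>
  define L where "L k = 15000 / 4 * (real (n1 k + n2 k)^3 / (\<epsilon> * real (min (n1 k) (n2 k))^4)
     + 2 * real (n1 k + n2 k)^2 / real (min (n1 k) (n2 k))^2 * ((MAX i\<in>{1..k}. (p1 k i)^2) / (\<Sum>i=1..k. (p1 k i)^2)
          + (MAX i\<in>{1..k}. (p2 k i)^2) / (\<Sum>i=1..k. (p2 k i)^2)))" for k
  have Llim: "L \<longlonglongrightarrow> 0" unfolding L_def
    by (rule L_lim[OF cond1a cond1b \<open>0 < c\<close> \<open>c < 1\<close> cond2a cond2b e])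
  have measX1: "\<And>k i. i \<in> {1..k} \<Longrightarrow> X1 k i \<in> measurable (M k) (count_space UNIV)"
    by (rule prob_space.pair_measU[OF prob indep])
  have measX2: "\<And>k i. i \<in> {1..k} \<Longrightarrow> X2 k i \<in> measurable (M k) (count_space UNIV)"
    by (rule prob_space.pair_measV[OF prob indep])
  have measZ: "Z k i \<in> borel_measurable (M k)" if "i \<in> {1..k}" for k i
    unfolding Z_def
    by (rule meas2[where G="\<lambda>x y. fi (n1 k) (n2 k) (p1 k i - p2 k i) (real x) (real y) / \<sigma> k", OF measX1[OF that] measX2[OF that]])
  have eqf: "(\<lambda>\<omega>. (\<Sum>i=1..k. fi (n1 k) (n2 k) (p1 k i - p2 k i) (real (X1 k i \<omega>)) (real (X2 k i \<omega>)))
                     / sigma_k k (n1 k) (n2 k) (p1 k) (p2 k)) = (\<lambda>\<omega>. \<Sum>i\<in>{1..k}. Z k i \<omega>)" for k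
    by (simp add: Z_def \<sigma>_def sum_divide_distrib)
  have ev0: "eventually (\<lambda>k. 1 \<le> k \<and> 1 \<le> min (n1 k) (n2 k)) sequentially"
  proof -
    have "eventually (\<lambda>k. 1 \<le> min (n1 k) (n2 k)) sequentially"
      using cond1a by (simp add: filterlim_at_top)
    moreover have "eventually (\<lambda>k. 1 \<le> k) sequentially" by (rule eventually_ge_at_top)
    ultimately show ?thesis by eventually_elim auto
  qed
  have ev: "eventually (\<lambda>k. finite {1..k} \<and> prob_space.indep_vars (M k) (\<lambda>_. borel) (Z k) {1..k}
      \<and> (\<forall>i\<in>{1..k}. integrable (M k) (\<lambda>\<omega>. Z k i \<omega> ^ 4) \<and> (\<integral>\<omega>. Z k i \<omega> \<partial>M k) = 0)
      \<and> (\<Sum>i\<in>{1..k}. \<integral>\<omega>. Z k i \<omega> ^ 2 \<partial>M k) = 1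
      \<and> (\<Sum>i\<in>{1..k}. \<integral>\<omega>. Z k i \<omega> ^ 4 \<partial>M k) \<le> L k) sequentially"
    using ev0
  proof eventually_elim
    case (elim k)
    then have k1: "1 \<le> k" and n1p: "0 < n1 k" and n2p: "0 < n2 k" by auto
    define mm where "mm = real (min (n1 k) (n2 k))"
    define q where "q i = p1 k i / real (n1 k) + p2 k i / real (n2 k)" for i
    define Q where "Q = (\<Sum>i=1..k. (q i)^2)"
    have pnn: "\<And>i. i \<in> {1..k} \<Longrightarrow> 0 \<le> p1 k i \<and> 0 \<le> p2 k i" using prob_vec1[OF k1] prob_vec2[OF k1] by auto
    have mm: "0 < mm" "mm \<le> real (n1 k)" "mm \<le> real (n2 k)" using elim by (auto simp: mm_def)
    have NN: "real (n1 k) \<le> real (n1 k + n2 k)" "real (n2 k) \<le> real (n1 k + n2 k)" by auto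
    note sb = sum_bound[OF k1 mm NN pnn conjunct2[OF prob_vec1[OF k1]] conjunct2[OF prob_vec2[OF k1]] e e2[OF k1]]
    have Qpos: "0 < Q" using sb(1) by (simp add: Q_def q_def)
    have sig2: "(\<sigma> k)^2 = 2 * Q" using Qpos
      by (simp add: \<sigma>_def sigma_k_def Q_def q_def)
    have sig0: "\<sigma> k \<noteq> 0" using sig2 Qpos by auto
    have facts: "integrable (M k) (\<lambda>\<omega>. Z k i \<omega> ^ 4) \<and> (\<integral>\<omega>. Z k i \<omega> \<partial>M k) = 0
       \<and> (\<integral>\<omega>. Z k i \<omega> ^ 2 \<partial>M k) = 2 * (q i)^2 / (\<sigma> k)^2
       \<and> (\<integral>\<omega>. Z k i \<omega> ^ 4 \<partial>M k) \<le> 15000 * ((q i)^2 / mm^4 + (q i)^4) / (\<sigma> k)^4"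
      if i: "i \<in> {1..k}" for i
    proof -
      interpret P: pois2 "M k" "X1 k i" "X2 k i" "real (n1 k) * p1 k i" "real (n2 k) * p2 k i"
        unfolding pois2_def pois2_axioms_def pois_def pois_axioms_def
        using prob measX1[OF i] measX2[OF i] pois1[OF i] pois2[OF i] pnn[OF i]
          prob_space.pair_indep_var[OF prob indep i] by auto
      define a where "a = 1 / real (n1 k)"
      define b where "b = 1 / real (n2 k)"
      have Zeq: "Z k i \<omega> = P.T a b \<omega> / \<sigma> k" for \<omega>
        unfolding Z_def P.T_def a_def b_def using n1p n2p by (simp add: fi_T)
      have Z4: "(\<lambda>\<omega>. Z k i \<omega> ^ 4) = (\<lambda>\<omega>. (P.T a b \<omega>)^4 / (\<sigma> k)^4)" by (simp add: Zeq power_divide)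
      have Z2: "(\<lambda>\<omega>. Z k i \<omega> ^ 2) = (\<lambda>\<omega>. (P.T a b \<omega>)^2 / (\<sigma> k)^2)" by (simp add: Zeq power_divide)
      have Z1: "Z k i = (\<lambda>\<omega>. P.T a b \<omega> / \<sigma> k)" by (simp add: Zeq fun_eq_iff)
      have "integrable (M k) (\<lambda>\<omega>. Z k i \<omega> ^ 4)" unfolding Z4 using P.T4(1) by simp
      moreover have "(\<integral>\<omega>. Z k i \<omega> \<partial>M k) = 0" unfolding Z1 using P.T_mean by simp
      moreover have "(\<integral>\<omega>. Z k i \<omega> ^ 2 \<partial>M k) = 2 * (q i)^2 / (\<sigma> k)^2"
      proof -
        have "a^2 * (real (n1 k) * p1 k i) + b^2 * (real (n2 k) * p2 k i) = q i"
          using n1p n2p by (simp add: a_def b_def q_def power2_eq_square)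
        then show ?thesis unfolding Z2 using P.T_sq[of a b] by simp
      qed
      moreover have "(\<integral>\<omega>. Z k i \<omega> ^ 4 \<partial>M k) \<le> 15000 * ((q i)^2 / mm^4 + (q i)^4) / (\<sigma> k)^4"
      proof -
        have "(\<integral>\<omega>. Z k i \<omega> ^ 4 \<partial>M k) = (\<integral>\<omega>. (P.T a b \<omega>)^4 \<partial>M k) / (\<sigma> k)^4" unfolding Z4 by simp
        also have "\<dots> \<le> 15000 * ((q i)^2 / mm^4 + (q i)^4) / (\<sigma> k)^4"
        proof (rule divide_right_mono)
          have "(\<integral>\<omega>. (P.T a b \<omega>)^4 \<partial>M k) \<le> 27 * (a^8 * (8 * (real (n1 k) * p1 k i)^2 + 144 * (real (n1 k) * p1 k i)^3 + 60 * (real (n1 k) * p1 k i)^4)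
      + b^8 * (8 * (real (n2 k) * p2 k i)^2 + 144 * (real (n2 k) * p2 k i)^3 + 60 * (real (n2 k) * p2 k i)^4)
      + 16 * a^4 * b^4 * (((real (n1 k) * p1 k i) + 3 * (real (n1 k) * p1 k i)^2) * ((real (n2 k) * p2 k i) + 3 * (real (n2 k) * p2 k i)^2)))"
            by (rule P.T4(2))
          also have "\<dots> \<le> 15000 * ((q i)^2 / mm^4 + (q i)^4)"
            unfolding a_def b_def q_def using B_bound[OF mm, of "p1 k i" "p2 k i"] pnn[OF i] by simp
          finally show "(\<integral>\<omega>. (P.T a b \<omega>)^4 \<partial>M k) \<le> 15000 * ((q i)^2 / mm^4 + (q i)^4)" .
        qed simp
        finally show ?thesis .
      qed
      ultimately show ?thesis by blast
    qed
    have ind: "prob_space.indep_vars (M k) (\<lambda>_. borel) (Z k) {1..k}"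
    proof -
      have "prob_space.indep_vars (M k) (\<lambda>_. borel)
          (\<lambda>i \<omega>. (\<lambda>i x y. fi (n1 k) (n2 k) (p1 k i - p2 k i) (real x) (real y) / \<sigma> k) i (X1 k i \<omega>) (X2 k i \<omega>)) {1..k}"
        by (rule prob_space.pair_indep_vars[OF prob indep])
      moreover have "(\<lambda>i \<omega>. (\<lambda>i x y. fi (n1 k) (n2 k) (p1 k i - p2 k i) (real x) (real y) / \<sigma> k) i (X1 k i \<omega>) (X2 k i \<omega>)) = Z k"
        by (simp add: Z_def fun_eq_iff)
      ultimately show ?thesis by simp
    qed
    have s2: "(\<Sum>i\<in>{1..k}. \<integral>\<omega>. Z k i \<omega> ^ 2 \<partial>M k) = 1"
    proof -
      have "(\<Sum>i\<in>{1..k}. \<integral>\<omega>. Z k i \<omega> ^ 2 \<partial>M k) = (\<Sum>i\<in>{1..k}. 2 * (q i)^2 / (\<sigma> k)^2)"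
        using facts by (intro sum.cong) auto
      also have "\<dots> = 2 * Q / (\<sigma> k)^2" by (simp add: Q_def sum_divide_distrib sum_distrib_left)
      also have "\<dots> = 1" using sig2 Qpos by simp
      finally show ?thesis .
    qed
    have s4: "(\<Sum>i\<in>{1..k}. \<integral>\<omega>. Z k i \<omega> ^ 4 \<partial>M k) \<le> L k"
    proof -
      have "(\<Sum>i\<in>{1..k}. \<integral>\<omega>. Z k i \<omega> ^ 4 \<partial>M k) \<le> (\<Sum>i\<in>{1..k}. 15000 * ((q i)^2 / mm^4 + (q i)^4) / (\<sigma> k)^4)"
        using facts by (intro sum_mono) auto
      also have "\<dots> = 15000 * (Q / mm^4 + (\<Sum>i=1..k. (q i)^4)) / (4 * Q^2)"
      proof -
        have "(\<sigma> k)^4 = 4 * Q^2" using sig2 by (simp flip: power_mult add: power_mult_distrib[symmetric] eval_nat_numeral)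
        then show ?thesis by (simp add: Q_def sum_divide_distrib[symmetric] sum_distrib_left[symmetric] sum.distrib)
      qed
      also have "\<dots> \<le> L k" unfolding L_def using sb(2) by (simp add: Q_def q_def mm_def)
      finally show ?thesis .
    qed
    show ?case using facts ind s2 s4 by auto
  qed
  have main: "weak_conv_m (\<lambda>k. distr (M k) borel (\<lambda>\<omega>. \<Sum>i\<in>{1..k}. Z k i \<omega>)) std_normal_distribution"
    by (rule clt_lyap[where I="\<lambda>k. {1..k}" and Z=Z and L=L, OF prob _ ev Llim])
       (rule borel_measurable_sum, rule measZ)
  show ?thesis unfolding eqf by (rule main)
qed

end
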